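(* Let $\|\cdot\|$ be a norm on $\mathbb{R}^d$ and $T:\mathbb{R}^d\to\mathbb{R}^d$ nonexpansive with $\operatorname{Fix}T\neq\emptyset$. Let $(\beta_n)_{n\ge1}\subseteq(0,1)$ be nondecreasing with $\lim_n\beta_n=1$ (and $\beta_0=0$), such that $\sum_{j=1}^\infty(1-\beta_j)=+\infty$ and $\sum_{j=1}^n(\beta_j-\beta_{j-1})<+\infty$. Let $x^0\in\mathbb{R}^d$ and $(x^n)$ be generated by $x^n=(1-\beta_n)x^0+\beta_n(Tx^{n-1}+U_n)$, where $(U_n)$ are random vectors with $\mathbb{E}(U_n)=0$ and $\sigma_n:=\mathbb{E}(\|U_n\|)$ satisfying $\sum_{n=1}^\infty\sigma_n<+\infty$. Then: (a) $\|x^n-Tx^n\|\to0$ almost surely, and (almost surely) every accumulation point of $(x^n)$ is a fixed point of $T$. (b) If $(\mathbb{R}^d,\|\cdot\|)$ is smooth, in the sense that $\lim_{\lambda\to0}\frac{\|x+\lambda y\|-\|x\|}{\lambda}$ exists for all $x,y$ in the unit sphere, then $(x^n)$ converges almost surely to some $x^*\in\operatorname{Fix}T$. *)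

theory Defs
  imports "HOL-Probability.Probability"
begin

definition is_norm :: "('v::real_vector \<Rightarrow> real) \<Rightarrow> bool" where
  "is_norm N \<longleftrightarrow>
     (\<forall>x. 0 \<le> N x) \<and> (\<forall>x. N x = 0 \<longleftrightarrow> x = 0) \<and>
     (\<forall>a x. N (a *\<^sub>R x) = \<bar>a\<bar> * N x) \<and>
     (\<forall>x y. N (x + y) \<le> N x + N y)"

definition nonexpansive_wrt :: "('v::real_vector \<Rightarrow> real) \<Rightarrow> ('v \<Rightarrow> 'v) \<Rightarrow> bool" where
  "nonexpansive_wrt N T \<longleftrightarrow> (\<forall>x y. N (T x - T y) \<le> N (x - y))"

definition smooth_norm :: "('v::real_vector \<Rightarrow> real) \<Rightarrow> bool" where
  "smooth_norm N \<longleftrightarrow>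
     (\<forall>x y. N x = 1 \<longrightarrow> N y = 1 \<longrightarrow>
        (\<exists>L. ((\<lambda>t. (N (x + t *\<^sub>R y) - N x) / t) \<longlongrightarrow> L) (at 0)))"

end

theory Submission
  imports Defs
begin


context
  fixes N :: "'v::real_vector \<Rightarrow> real"
  assumes nN: "is_norm N"
begin

lemma N_nonneg: "0 \<le> N x" using nN unfolding is_norm_def by auto
lemma N_eq0: "N x = 0 \<longleftrightarrow> x = 0" using nN unfolding is_norm_def by auto
lemma N_scale: "N (a *\<^sub>R x) = \<bar>a\<bar> * N x" using nN unfolding is_norm_def by auto
lemma N_tri: "N (x + y) \<le> N x + N y" using nN unfolding is_norm_def by auto
lemma N_0[simp]: "N 0 = 0" using N_eq0 by auto
lemma N_neg: "N (- x) = N x" using N_scale[of "-1" x] by simp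
lemma N_commute: "N (x - y) = N (y - x)" using N_neg[of "x - y"] by simp
lemma N_diff_tri: "N (x - z) \<le> N (x - y) + N (y - z)"
  using N_tri[of "x - y" "y - z"] by simp
lemma N_tri_minus: "N (x - y) \<le> N x + N y"
  using N_tri[of x "- y"] N_neg[of y] by simp
lemma N_rev: "\<bar>N x - N y\<bar> \<le> N (x - y)"
proof -
  have "N x \<le> N (x - y) + N y" using N_tri[of "x - y" y] by simp
  moreover have "N y \<le> N (x - y) + N x" using N_tri[of "y - x" x] N_commute[of x y] by simp
  ultimately show ?thesis by linarith
qed
lemma N_sum: "N (sum f A) \<le> (\<Sum>i\<in>A. N (f i))"
proof (induction A rule: infinite_finite_induct)
  case (insert a A)
  then show ?case using N_tri[of "f a" "sum f A"] by simp
qed auto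

lemma N_convex:
  assumes "0 \<le> t" "t \<le> 1"
  shows "N ((1 - t) *\<^sub>R a + t *\<^sub>R b) \<le> (1 - t) * N a + t * N b"
  using N_tri[of "(1 - t) *\<^sub>R a" "t *\<^sub>R b"] N_scale[of "1-t" a] N_scale[of t b] assms by simp

lemma N_sq_convex:
  assumes "0 \<le> t" "t \<le> 1"
  shows "(N ((1 - t) *\<^sub>R a + t *\<^sub>R b))\<^sup>2 \<le> (1 - t) * (N a)\<^sup>2 + t * (N b)\<^sup>2"
proof -
  have "(N ((1 - t) *\<^sub>R a + t *\<^sub>R b))\<^sup>2 \<le> ((1 - t) * N a + t * N b)\<^sup>2"
    using N_convex[OF assms, of a b] N_nonneg by (simp add: power_mono)
  also have "\<dots> \<le> (1 - t) * (N a)\<^sup>2 + t * (N b)\<^sup>2"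
  proof -
    have "0 \<le> (1 - t) * t * (N a - N b)\<^sup>2" using assms by simp
    then show ?thesis by (simp add: power2_eq_square algebra_simps)
  qed
  finally show ?thesis .
qed

end

lemma N_upper:
  fixes N :: "'v::euclidean_space \<Rightarrow> real"
  assumes nN: "is_norm N"
  shows "\<exists>C>0. \<forall>x. N x \<le> C * norm x"
proof -
  define C where "C = (\<Sum>b\<in>Basis. N b) + 1"
  have C0: "C > 0" unfolding C_def using N_nonneg[OF nN] by (simp add: add_nonneg_pos sum_nonneg)
  have "N x \<le> C * norm x" for x
  proof -
    have "N x = N (\<Sum>b\<in>Basis. (x \<bullet> b) *\<^sub>R b)" by (simp add: euclidean_representation)
    also have "\<dots> \<le> (\<Sum>b\<in>Basis. N ((x \<bullet> b) *\<^sub>R b))" by (rule N_sum[OF nN])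
    also have "\<dots> = (\<Sum>b\<in>Basis. \<bar>x \<bullet> b\<bar> * N b)" using N_scale[OF nN] by simp
    also have "\<dots> \<le> (\<Sum>b\<in>Basis. norm x * N b)"
      by (intro sum_mono mult_right_mono Basis_le_norm N_nonneg[OF nN])
    also have "\<dots> \<le> C * norm x" unfolding C_def
      by (simp add: sum_distrib_right[symmetric] algebra_simps)
    finally show ?thesis .
  qed
  with C0 show ?thesis by blast
qed

lemma N_lipschitz:
  fixes N :: "'v::euclidean_space \<Rightarrow> real"
  assumes nN: "is_norm N"
  obtains C where "C > 0" "\<And>x y. \<bar>N x - N y\<bar> \<le> C * norm (x - y)"
  using N_upper[OF nN] N_rev[OF nN] by (meson order_trans)

lemma N_cont:
  fixes N :: "'v::euclidean_space \<Rightarrow> real"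
  assumes nN: "is_norm N"
  shows "continuous_on S N"
proof -
  obtain C where C: "C > 0" "\<And>x y. \<bar>N x - N y\<bar> \<le> C * norm (x - y)"
    using N_lipschitz[OF nN] by blast
  have "C-lipschitz_on S N"
    by (rule lipschitz_onI) (use C in \<open>auto simp: dist_norm dist_real_def\<close>)
  then show ?thesis by (rule lipschitz_on_continuous_on)
qed

lemma N_lower:
  fixes N :: "'v::euclidean_space \<Rightarrow> real"
  assumes nN: "is_norm N"
  shows "\<exists>c>0. \<forall>x. c * norm x \<le> N x"
proof -
  obtain b :: 'v where b: "b \<in> Basis" using nonempty_Basis by blast
  have ne: "sphere (0::'v) 1 \<noteq> {}" using b by (auto simp: norm_Basis)
  obtain m where m: "m \<in> sphere 0 1" "\<And>y. y \<in> sphere 0 1 \<Longrightarrow> N m \<le> N y"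
    using continuous_attains_inf[OF compact_sphere ne N_cont[OF nN]] by blast
  have mpos: "N m > 0" using m(1) N_nonneg[OF nN, of m] N_eq0[OF nN, of m] by auto
  have "N m * norm x \<le> N x" for x
  proof (cases "x = 0")
    case False
    have "(1 / norm x) *\<^sub>R x \<in> sphere 0 1" using False by simp
    then have "N m \<le> N ((1 / norm x) *\<^sub>R x)" by (rule m(2))
    also have "\<dots> = N x / norm x" using N_scale[OF nN] by simp
    finally show ?thesis using False by (simp add: field_simps)
  qed (simp add: N_0[OF nN])
  with mpos show ?thesis by blast
qed




lemma xu_lemma:
  fixes a g b c :: "nat \<Rightarrow> real"
  assumes a0: "\<And>n. 0 \<le> a n" and g: "\<And>n. 0 \<le> g n" "\<And>n. g n \<le> 1" and gdiv: "\<not> summable g"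
   and c0: "\<And>n. 0 \<le> c n" and cs: "summable c"
   and b: "\<And>e. e > 0 \<Longrightarrow> eventually (\<lambda>n. b n \<le> e) sequentially"
   and rec: "eventually (\<lambda>n. a (Suc n) \<le> (1 - g n) * a n + g n * b n + c n) sequentially"
  shows "a \<longlonglongrightarrow> 0"
proof (rule LIMSEQ_I)
  fix r :: real assume r: "r > 0"
  define e where "e = r / 4"
  have e: "e > 0" using r by (simp add: e_def)
  obtain n1 where n1: "\<And>n. n \<ge> n1 \<Longrightarrow> b n \<le> e \<and> a (Suc n) \<le> (1 - g n) * a n + g n * b n + c n"
    using eventually_conj[OF b[OF e] rec] unfolding eventually_sequentially by blast
  obtain n2 where n2: "\<And>n. n \<ge> n2 \<Longrightarrow> norm (\<Sum>i. c (i + n)) < e"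
    using suminf_exist_split[OF e cs] by blast
  define m where "m = max n1 n2"
  define P where "P n = (\<Prod>k\<in>{m..<n}. 1 - g k)" for n
  define S where "S n = (\<Sum>k\<in>{m..<n}. c k)" for n
  have S0: "0 \<le> S n" for n unfolding S_def by (simp add: sum_nonneg c0)
  have P0: "0 \<le> P n" for n unfolding P_def using g by (simp add: prod_nonneg)
  have claim: "a n \<le> e + P n * a m + S n" if "m \<le> n" for n
    using that
  proof (induction n rule: dec_induct)
    case base then show ?case by (simp add: P_def S_def e less_imp_le)
  next
    case (step n)
    have nn1: "n \<ge> n1" using step(1) m_def by simp
    have PS: "P (Suc n) = (1 - g n) * P n" "S (Suc n) = S n + c n"
      unfolding P_def S_def using step(1) by (simp_all add: prod.atLeastLessThan_Suc sum.atLeastLessThan_Suc)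
    have "a (Suc n) \<le> (1 - g n) * a n + g n * e + c n"
      using n1[OF nn1] mult_left_mono[of "b n" e "g n"] g[of n] by linarith
    also have "\<dots> \<le> (1 - g n) * (e + P n * a m + S n) + g n * e + c n"
      using step(3) g[of n] by (simp add: mult_left_mono)
    also have "\<dots> \<le> e + P (Suc n) * a m + S (Suc n)"
    proof -
      have "(1 - g n) * S n \<le> S n" using g[of n] S0[of n] by (simp add: mult_left_le_one_le)
      then show ?thesis unfolding PS by (simp add: algebra_simps)
    qed
    finally show ?case .
  qed
  have Sle: "S n \<le> e" for n
  proof -
    have "S n \<le> (\<Sum>i<n - m. c (i + m))"
      unfolding S_def
    proof (cases "m \<le> n")
      case True
      have "(\<Sum>k\<in>{m..<n}. c k) = (\<Sum>i\<in>{0..<n-m}. c (i + m))"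
        using sum.atLeastLessThan_shift_0[of c m n] by (simp add: o_def add.commute)
      then show "(\<Sum>k\<in>{m..<n}. c k) \<le> (\<Sum>i<n - m. c (i + m))" by (simp add: atLeast0LessThan)
    qed simp
    also have "\<dots> \<le> (\<Sum>i. c (i + m))"
      by (rule sum_le_suminf) (use cs c0 in \<open>auto simp: summable_iff_shift\<close>)
    also have "\<dots> < e" using n2[of m] m_def by simp
    finally show ?thesis by simp
  qed
  define K where "K = a m / e"
  have "\<exists>n3\<ge>m. (\<Sum>k\<in>{m..<n3}. g k) \<ge> K"
  proof (rule ccontr)
    assume "\<not> ?thesis"
    then have h: "\<And>n. n \<ge> m \<Longrightarrow> (\<Sum>k\<in>{m..<n}. g k) < K" by force
    have "\<forall>n. sum g {..<n} \<le> sum g {..<m} + K"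
    proof
      fix n
      show "sum g {..<n} \<le> sum g {..<m} + K"
      proof (cases "m \<le> n")
        case True
        have "sum g {..<n} = sum g {..<m} + sum g {m..<n}"
          using True by (metis sum.atLeastLessThan_concat lessThan_atLeast0 zero_le)
        then show ?thesis using h[OF True] by simp
      next
        case False
        have "sum g {..<n} \<le> sum g {..<m}" using False g by (intro sum_mono2) auto
        moreover have "K \<ge> 0" unfolding K_def using a0 e by simp
        ultimately show ?thesis by simp
      qed
    qed
    then have "summable g" using g by (intro summableI_nonneg_bounded) auto
    with gdiv show False by simp
  qed
  then obtain n3 where n3: "n3 \<ge> m" "(\<Sum>k\<in>{m..<n3}. g k) \<ge> K" by blast
  show "\<exists>no. \<forall>n\<ge>no. norm (a n - 0) < r"
  proof (intro exI allI impI)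
    fix n assume n: "n \<ge> n3"
    have gs: "(\<Sum>k\<in>{m..<n}. g k) \<ge> K"
    proof -
      have "sum g {m..<n3} \<le> sum g {m..<n}" by (rule sum_mono2) (use n g in auto)
      then show ?thesis using n3 by linarith
    qed
    have "P n \<le> (\<Prod>k\<in>{m..<n}. exp (- g k))"
      unfolding P_def
    proof (intro prod_mono conjI)
      fix k show "0 \<le> 1 - g k" using g(2)[of k] by simp
      show "1 - g k \<le> exp (- g k)" using exp_ge_add_one_self[of "- g k"] by simp
    qed
    also have "\<dots> = exp (- (\<Sum>k\<in>{m..<n}. g k))" by (simp add: exp_sum sum_negf[symmetric])
    also have "\<dots> \<le> exp (- K)" using gs by simp
    also have "\<dots> \<le> 1 / (1 + K)"
    proof -
      have K0: "K \<ge> 0" unfolding K_def using a0 e by simp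
      have "1 + K \<le> exp K" by (rule exp_ge_add_one_self)
      then show ?thesis using K0 by (simp add: exp_minus field_simps)
    qed
    finally have Pn: "P n \<le> 1 / (1 + K)" .
    have "P n * a m \<le> a m / (1 + K)"
      using mult_right_mono[OF Pn a0[of m]] by simp
    also have "\<dots> \<le> e"
      unfolding K_def using e a0[of m] by (simp add: field_simps)
    finally have "P n * a m \<le> e" .
    then have "a n \<le> 3 * e" using claim[of n] Sle[of n] n n3 by simp
    then show "norm (a n - 0) < r" using a0[of n] e r e_def by simp
  qed
qed




definition gd :: "('v::real_vector \<Rightarrow> real) \<Rightarrow> 'v \<Rightarrow> 'v \<Rightarrow> real" where
  "gd N v w = Lim (at (0::real)) (\<lambda>t. ((N (v + t *\<^sub>R w))\<^sup>2 - (N v)\<^sup>2) / t)"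

lemma filterlim_scale_at0:
  fixes k :: real assumes "k \<noteq> 0"
  shows "filterlim (\<lambda>t. k * t) (at 0) (at 0)"
  unfolding filterlim_at
proof
  show "\<forall>\<^sub>F t in at 0. k * t \<in> UNIV \<and> k * t \<noteq> 0"
    using assms by (auto simp: eventually_at_filter)
  show "((\<lambda>t. k * t) \<longlongrightarrow> 0) (at 0)"
    by (rule tendsto_eq_intros) (auto intro: tendsto_ident_at)
qed

lemma eventually_at_right_01:
  assumes "\<And>t::real. 0 < t \<Longrightarrow> t < 1 \<Longrightarrow> P t" shows "eventually P (at_right 0)"
proof -
  have "\<exists>b>0. \<forall>y>0. y < b \<longrightarrow> P y" using assms by (intro exI[of _ 1]) auto
  then show ?thesis using eventually_at_right[of "0::real" 1 P] by simp
qed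

context
  fixes N :: "'v::real_vector \<Rightarrow> real"
  assumes nN: "is_norm N" and sN: "smooth_norm N"
begin

lemma gd_exists: "\<exists>L. ((\<lambda>t. ((N (v + t *\<^sub>R w))\<^sup>2 - (N v)\<^sup>2) / t) \<longlongrightarrow> L) (at 0)"
proof (cases "v = 0")
  case True
  have "(\<lambda>t. ((N (v + t *\<^sub>R w))\<^sup>2 - (N v)\<^sup>2) / t) = (\<lambda>t. t * (N w)\<^sup>2)"
  proof (rule ext)
    fix t :: real
    show "((N (v + t *\<^sub>R w))\<^sup>2 - (N v)\<^sup>2) / t = t * (N w)\<^sup>2"
    proof (cases "t = 0")
      case False
      have "(N (t *\<^sub>R w))\<^sup>2 = t\<^sup>2 * (N w)\<^sup>2" by (simp add: N_scale[OF nN] power_mult_distrib)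
      then show ?thesis using True False by (simp add: N_0[OF nN] power2_eq_square)
    qed simp
  qed
  moreover have "((\<lambda>t. t * (N w)\<^sup>2) \<longlongrightarrow> 0 * (N w)\<^sup>2) (at (0::real))"
    by (intro tendsto_intros)
  ultimately show ?thesis by auto
next
  case vne: False
  show ?thesis
  proof (cases "w = 0")
    case True
    then show ?thesis by auto
  next
    case wne: False
    have Nv: "N v > 0" using vne N_nonneg[OF nN, of v] N_eq0[OF nN, of v] by auto
    have Nw: "N w > 0" using wne N_nonneg[OF nN, of w] N_eq0[OF nN, of w] by auto
    define x where "x = (1 / N v) *\<^sub>R v"
    define y where "y = (1 / N w) *\<^sub>R w"
    have Nx: "N x = 1" "N y = 1" using Nv Nw N_scale[OF nN] by (auto simp: x_def y_def)
    obtain L where L: "((\<lambda>t. (N (x + t *\<^sub>R y) - N x) / t) \<longlongrightarrow> L) (at 0)"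
      using sN Nx unfolding smooth_norm_def by blast
    define k where "k = N w / N v"
    have k: "k > 0" using Nv Nw by (simp add: k_def)
    define Q where "Q s = (N (x + s *\<^sub>R y) - 1) / s" for s
    have hQ: "((\<lambda>t. Q (k * t)) \<longlongrightarrow> L) (at 0)"
      using filterlim_compose[OF L[unfolded Nx(1)] filterlim_scale_at0[of k]] k
      unfolding Q_def by simp
    have key: "N (v + t *\<^sub>R w) = N v + t * (N v * k * Q (k * t))" if "t \<noteq> 0" for t
    proof -
      have "v + t *\<^sub>R w = N v *\<^sub>R (x + (k * t) *\<^sub>R y)"
        using Nv Nw by (simp add: x_def y_def k_def scaleR_add_right)
      then have "N (v + t *\<^sub>R w) = N v * N (x + (k * t) *\<^sub>R y)"
        using N_scale[OF nN] Nv by simp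
      also have "N (x + (k * t) *\<^sub>R y) = 1 + (k * t) * Q (k * t)"
        using that k by (simp add: Q_def)
      finally show ?thesis by (simp add: algebra_simps)
    qed
    define D where "D t = N v * k * Q (k * t)" for t
    have ev: "\<forall>\<^sub>F t in at 0. (2 * N v + t * D t) * D t = ((N (v + t *\<^sub>R w))\<^sup>2 - (N v)\<^sup>2) / t"
      unfolding eventually_at_filter
    proof (rule always_eventually, intro allI impI)
      fix t :: real assume "t \<noteq> 0"
      then show "(2 * N v + t * D t) * D t = ((N (v + t *\<^sub>R w))\<^sup>2 - (N v)\<^sup>2) / t"
        using key[of t] unfolding D_def by (simp add: field_simps power2_eq_square)
    qed
    have "((\<lambda>t. (2 * N v + t * D t) * D t) \<longlongrightarrow> (2 * N v + 0 * (N v * k * L)) * (N v * k * L)) (at 0)"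
      unfolding D_def by (intro tendsto_intros hQ tendsto_ident_at)
    then show ?thesis using tendsto_cong[OF ev] by auto
  qed
qed

lemma gd_tendsto: "((\<lambda>t. ((N (v + t *\<^sub>R w))\<^sup>2 - (N v)\<^sup>2) / t) \<longlongrightarrow> gd N v w) (at 0)"
proof -
  obtain L where L: "((\<lambda>t. ((N (v + t *\<^sub>R w))\<^sup>2 - (N v)\<^sup>2) / t) \<longlongrightarrow> L) (at 0)"
    using gd_exists by blast
  then have "gd N v w = L" unfolding gd_def by (intro tendsto_Lim) auto
  with L show ?thesis by simp
qed

lemma gd_right: "((\<lambda>t. ((N (v + t *\<^sub>R w))\<^sup>2 - (N v)\<^sup>2) / t) \<longlongrightarrow> gd N v w) (at_right 0)"
  by (rule tendsto_mono[OF at_le gd_tendsto]) simp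

lemma gd_G1: "(N v)\<^sup>2 + gd N v w \<le> (N (v + w))\<^sup>2"
proof -
  have "gd N v w \<le> (N (v + w))\<^sup>2 - (N v)\<^sup>2"
  proof (rule tendsto_upperbound[OF gd_right])
    show "\<forall>\<^sub>F t in at_right 0. ((N (v + t *\<^sub>R w))\<^sup>2 - (N v)\<^sup>2) / t \<le> (N (v + w))\<^sup>2 - (N v)\<^sup>2"
    proof (rule eventually_at_right_01)
      fix t :: real assume t: "0 < t" "t < 1"
      have "(N ((1 - t) *\<^sub>R v + t *\<^sub>R (v + w)))\<^sup>2 \<le> (1 - t) * (N v)\<^sup>2 + t * (N (v + w))\<^sup>2"
        using N_sq_convex[OF nN, of t] t by simp
      moreover have "(1 - t) *\<^sub>R v + t *\<^sub>R (v + w) = v + t *\<^sub>R w"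
        by (simp add: algebra_simps)
      ultimately have "(N (v + t *\<^sub>R w))\<^sup>2 - (N v)\<^sup>2 \<le> t * ((N (v + w))\<^sup>2 - (N v)\<^sup>2)"
        by (simp add: algebra_simps)
      then show "((N (v + t *\<^sub>R w))\<^sup>2 - (N v)\<^sup>2) / t \<le> (N (v + w))\<^sup>2 - (N v)\<^sup>2"
        using t by (simp add: divide_le_eq mult.commute)
    qed
  qed simp
  then show ?thesis by simp
qed

lemma gd_scale: "gd N v (c *\<^sub>R w) = c * gd N v w"
proof (cases "c = 0")
  case True
  have "gd N v (c *\<^sub>R w) = Lim (at (0::real)) (\<lambda>t. 0)" unfolding gd_def using True by simp
  also have "\<dots> = 0" by (intro tendsto_Lim) auto
  finally show ?thesis using True by simp
next
  case False
  have eq: "(\<lambda>t. ((N (v + t *\<^sub>R (c *\<^sub>R w)))\<^sup>2 - (N v)\<^sup>2) / t)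
      = (\<lambda>t. c * (((N (v + (c * t) *\<^sub>R w))\<^sup>2 - (N v)\<^sup>2) / (c * t)))"
    using False by (auto simp: fun_eq_iff mult.commute)
  have "((\<lambda>t. c * (((N (v + (c * t) *\<^sub>R w))\<^sup>2 - (N v)\<^sup>2) / (c * t))) \<longlongrightarrow> c * gd N v w) (at 0)"
    by (intro tendsto_intros filterlim_compose[OF gd_tendsto filterlim_scale_at0[OF False]])
  then show ?thesis unfolding gd_def eq by (intro tendsto_Lim) auto
qed

lemma gd_upper:
  assumes "s > 0"
  shows "gd N v w \<le> ((N (v + s *\<^sub>R w))\<^sup>2 - (N v)\<^sup>2) / s"
proof -
  have "(N v)\<^sup>2 + s * gd N v w \<le> (N (v + s *\<^sub>R w))\<^sup>2"
    using gd_G1[of v "s *\<^sub>R w"] gd_scale by simp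
  then show ?thesis using assms by (simp add: le_divide_eq mult.commute)
qed

lemma gd_neg: "gd N (- v) (- w) = gd N v w"
proof -
  have "N (- v + t *\<^sub>R (- w)) = N (v + t *\<^sub>R w)" for t
    using N_neg[OF nN, of "v + t *\<^sub>R w"] by (simp add: algebra_simps)
  then show ?thesis unfolding gd_def using N_neg[OF nN] by simp
qed

lemma gd_self: "gd N v v = 2 * (N v)\<^sup>2"
proof -
  have ev: "\<forall>\<^sub>F t in at 0. (2 + t) * (N v)\<^sup>2 = ((N (v + t *\<^sub>R v))\<^sup>2 - (N v)\<^sup>2) / t"
    unfolding eventually_at
  proof (intro exI[of _ 1] conjI ballI impI)
    fix t :: real assume t: "t \<noteq> 0 \<and> dist t 0 < 1"
    then have "1 + t > 0" by (auto simp: dist_real_def)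
    then have "N (v + t *\<^sub>R v) = (1 + t) * N v"
      using N_scale[OF nN, of "1 + t" v] by (simp add: algebra_simps)
    then show "(2 + t) * (N v)\<^sup>2 = ((N (v + t *\<^sub>R v))\<^sup>2 - (N v)\<^sup>2) / t"
      using t by (simp add: field_simps power2_eq_square)
  qed simp
  have "((\<lambda>t. (2 + t) * (N v)\<^sup>2) \<longlongrightarrow> (2 + 0) * (N v)\<^sup>2) (at (0::real))"
    by (intro tendsto_intros tendsto_ident_at)
  then have "((\<lambda>t. ((N (v + t *\<^sub>R v))\<^sup>2 - (N v)\<^sup>2) / t) \<longlongrightarrow> 2 * (N v)\<^sup>2) (at 0)"
    using tendsto_cong[OF ev] by simp
  then show ?thesis unfolding gd_def by (intro tendsto_Lim) auto
qed

lemma gd_subadd: "gd N v (a + b) \<le> gd N v a + gd N v b"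
proof -
  have lim: "((\<lambda>s. (1/2) * (((N (v + s *\<^sub>R (2 *\<^sub>R a)))\<^sup>2 - (N v)\<^sup>2) / s)
      + (1/2) * (((N (v + s *\<^sub>R (2 *\<^sub>R b)))\<^sup>2 - (N v)\<^sup>2) / s))
     \<longlongrightarrow> (1/2) * gd N v (2 *\<^sub>R a) + (1/2) * gd N v (2 *\<^sub>R b)) (at_right 0)"
    by (intro tendsto_intros gd_right)
  have "gd N v (a + b) \<le> (1/2) * gd N v (2 *\<^sub>R a) + (1/2) * gd N v (2 *\<^sub>R b)"
  proof (rule tendsto_lowerbound[OF lim])
    show "\<forall>\<^sub>F s in at_right 0. gd N v (a + b) \<le> (1/2) * (((N (v + s *\<^sub>R (2 *\<^sub>R a)))\<^sup>2 - (N v)\<^sup>2) / s)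
      + (1/2) * (((N (v + s *\<^sub>R (2 *\<^sub>R b)))\<^sup>2 - (N v)\<^sup>2) / s)"
    proof (rule eventually_at_right_01)
      fix s :: real assume s: "0 < s" "s < 1"
      have "(N ((1 - 1/2) *\<^sub>R (v + s *\<^sub>R (2 *\<^sub>R a)) + (1/2) *\<^sub>R (v + s *\<^sub>R (2 *\<^sub>R b))))\<^sup>2
          \<le> (1 - 1/2) * (N (v + s *\<^sub>R (2 *\<^sub>R a)))\<^sup>2 + (1/2) * (N (v + s *\<^sub>R (2 *\<^sub>R b)))\<^sup>2"
        by (rule N_sq_convex[OF nN]) auto
      moreover have "(1 - 1/2) *\<^sub>R (v + s *\<^sub>R (2 *\<^sub>R a)) + (1/2) *\<^sub>R (v + s *\<^sub>R (2 *\<^sub>R b)) = v + s *\<^sub>R (a + b)"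
      proof -
        have h2: "(1/2) *\<^sub>R v + (1/2) *\<^sub>R v = v" by (metis scaleR_add_left field_sum_of_halves scaleR_one)
        show ?thesis by (simp add: algebra_simps h2)
      qed
      ultimately have h: "(N (v + s *\<^sub>R (a + b)))\<^sup>2 \<le> (1/2) * (N (v + s *\<^sub>R (2 *\<^sub>R a)))\<^sup>2 + (1/2) * (N (v + s *\<^sub>R (2 *\<^sub>R b)))\<^sup>2"
        by simp
      have "gd N v (a + b) \<le> ((N (v + s *\<^sub>R (a + b)))\<^sup>2 - (N v)\<^sup>2) / s" by (rule gd_upper[OF s(1)])
      also have "\<dots> \<le> (((1/2) * (N (v + s *\<^sub>R (2 *\<^sub>R a)))\<^sup>2 + (1/2) * (N (v + s *\<^sub>R (2 *\<^sub>R b)))\<^sup>2) - (N v)\<^sup>2) / s"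
        using h s by (intro divide_right_mono) auto
      also have "\<dots> = (1/2) * (((N (v + s *\<^sub>R (2 *\<^sub>R a)))\<^sup>2 - (N v)\<^sup>2) / s)
      + (1/2) * (((N (v + s *\<^sub>R (2 *\<^sub>R b)))\<^sup>2 - (N v)\<^sup>2) / s)"
        using s by (simp add: field_simps)
      finally show "gd N v (a + b) \<le> (1/2) * (((N (v + s *\<^sub>R (2 *\<^sub>R a)))\<^sup>2 - (N v)\<^sup>2) / s)
      + (1/2) * (((N (v + s *\<^sub>R (2 *\<^sub>R b)))\<^sup>2 - (N v)\<^sup>2) / s)" .
    qed
  qed simp
  then show ?thesis using gd_scale[of v 2 a] gd_scale[of v 2 b] by simp
qed

lemma gd_add: "gd N v (a + b) = gd N v a + gd N v b"
proof -
  have h: "gd N v (- a + - b) \<le> gd N v (- a) + gd N v (- b)" by (rule gd_subadd)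
  have e1: "gd N v (- a + - b) = - gd N v (a + b)" using gd_scale[of v "-1" "a+b"] by simp
  have e2: "gd N v (- a) = - gd N v a" using gd_scale[of v "-1" a] by simp
  have e3: "gd N v (- b) = - gd N v b" using gd_scale[of v "-1" b] by simp
  show ?thesis using h e1 e2 e3 gd_subadd[of v a b] by linarith
qed

end




lemma N_seq_cont:
  fixes N :: "'v::real_vector \<Rightarrow> real"
  assumes nN: "is_norm N" and f: "(\<lambda>k. N (f k - l)) \<longlonglongrightarrow> 0"
  shows "(\<lambda>k. N (f k + d)) \<longlonglongrightarrow> N (l + d)"
proof -
  have "(\<lambda>k. N (f k + d) - N (l + d)) \<longlonglongrightarrow> 0"
  proof (rule Lim_null_comparison[OF _ f])
    show "\<forall>\<^sub>F k in sequentially. norm (N (f k + d) - N (l + d)) \<le> N (f k - l)"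
      using N_rev[OF nN, of "f k + d" "l + d" for k] by simp
  qed
  then show ?thesis by (rule LIM_zero_cancel)
qed

lemma N_compact:
  fixes N :: "'v::euclidean_space \<Rightarrow> real" and f :: "nat \<Rightarrow> 'v"
  assumes nN: "is_norm N" and B: "\<And>n. N (f n - a) \<le> B"
  shows "\<exists>r l. strict_mono r \<and> (\<lambda>n. N (f (r n) - l)) \<longlonglongrightarrow> 0"
proof -
  obtain c where c: "c > 0" "\<And>x. c * norm x \<le> N x" using N_lower[OF nN] by blast
  obtain C where C: "C > 0" "\<And>x. N x \<le> C * norm x" using N_upper[OF nN] by blast
  have "norm (f n) \<le> norm a + B / c" for n
  proof -
    have "norm (f n - a) \<le> B / c" using c(2)[of "f n - a"] B[of n] c(1) by (simp add: field_simps)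
    then show ?thesis using norm_triangle_sub[of "f n" a] by linarith
  qed
  then have "bounded (range f)" unfolding bounded_iff by blast
  from bounded_imp_convergent_subsequence[OF this] obtain l r where lr: "strict_mono r" "(f \<circ> r) \<longlonglongrightarrow> l"
    by blast
  have "(\<lambda>n. N (f (r n) - l)) \<longlonglongrightarrow> 0"
  proof (rule Lim_null_comparison)
    show "\<forall>\<^sub>F n in sequentially. norm (N (f (r n) - l)) \<le> C * norm (f (r n) - l)"
      using C(2) N_nonneg[OF nN] by simp
    have "(\<lambda>n. norm (f (r n) - l)) \<longlonglongrightarrow> 0"
      using tendsto_norm_zero[OF LIM_zero[OF lr(2)]] by (simp add: o_def)
    then show "(\<lambda>n. C * norm (f (r n) - l)) \<longlonglongrightarrow> 0"
      using tendsto_mult_right_zero by blast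
  qed
  with lr show ?thesis by blast
qed

lemma vec_id: "((1 - b2) *\<^sub>R x + b2 *\<^sub>R a) - ((1 - b1) *\<^sub>R x + b1 *\<^sub>R c) = (b2 - b1) *\<^sub>R (a - x) + b1 *\<^sub>R (a - (c::'v::real_vector))"
  by (simp add: algebra_simps)

lemma vec_id2: "((1 - b) *\<^sub>R x + b *\<^sub>R a) - c = (1 - b) *\<^sub>R (x - a) + (a - (c::'v::real_vector))"
  by (simp add: algebra_simps)

lemma vec_id3: "((1 - b) *\<^sub>R x + b *\<^sub>R (a + u)) - ((1 - b) *\<^sub>R x + b *\<^sub>R c) = b *\<^sub>R ((a - c) + (u::'v::real_vector))"
  by (simp add: algebra_simps)

lemma vec_id4: "((1 - b) *\<^sub>R x + b *\<^sub>R a) - p = (1 - b) *\<^sub>R (x - p) + b *\<^sub>R (a - (p::'v::real_vector))"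
  by (simp add: algebra_simps)

primrec halpern :: "('v::real_vector \<Rightarrow> 'v) \<Rightarrow> (nat \<Rightarrow> real) \<Rightarrow> 'v \<Rightarrow> nat \<Rightarrow> 'v" where
  "halpern T b x0 0 = x0"
| "halpern T b x0 (Suc n) = (1 - b (Suc n)) *\<^sub>R x0 + b (Suc n) *\<^sub>R T (halpern T b x0 n)"

locale halp =
  fixes N :: "'v::euclidean_space \<Rightarrow> real" and T :: "'v \<Rightarrow> 'v" and \<beta> :: "nat \<Rightarrow> real" and x0 :: 'v
  assumes nN: "is_norm N" and neT: "nonexpansive_wrt N T" and fixT: "\<exists>p. T p = p"
    and b0: "\<beta> 0 = 0" and bpos: "\<forall>n\<ge>1. 0 < \<beta> n \<and> \<beta> n < 1"
    and bmono: "\<forall>n\<ge>1. \<beta> n \<le> \<beta> (Suc n)"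
    and blim: "\<beta> \<longlonglongrightarrow> 1" and bdiv: "\<not> summable (\<lambda>j. 1 - \<beta> (Suc j))"
    and bsum: "summable (\<lambda>j. \<beta> (Suc j) - \<beta> j)"
begin

abbreviation "y \<equiv> halpern T \<beta> x0"

lemma bet': "0 \<le> \<beta> n \<and> \<beta> n \<le> 1"
proof (cases "n = 0")
  case False then have "1 \<le> n" by simp
  then have "0 < \<beta> n \<and> \<beta> n < 1" using bpos by blast
  then show ?thesis by linarith
qed (simp add: b0)

lemma bet: "0 \<le> \<beta> n" "\<beta> n \<le> 1" using bet' by auto

lemma bSuc': "0 < \<beta> (Suc n) \<and> \<beta> (Suc n) < 1" using bpos[rule_format, of "Suc n"] by simp
lemma bSuc: "0 < \<beta> (Suc n)" "\<beta> (Suc n) < 1" using bSuc' by blast+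

lemma bmono': "\<beta> (Suc n) \<le> \<beta> (Suc (Suc n))" using bmono[rule_format, of "Suc n"] by simp

lemma ne: "N (T a - T b) \<le> N (a - b)" using neT unfolding nonexpansive_wrt_def by blast

lemma ybound: assumes "T p = p" shows "N (y n - p) \<le> N (x0 - p)"
proof (induction n)
  case (Suc n)
  let ?t = "\<beta> (Suc n)"
  have "y (Suc n) - p = ((1 - ?t) *\<^sub>R x0 + ?t *\<^sub>R T (y n)) - p"
    by (simp only: halpern.simps(2))
  also have "\<dots> = (1 - ?t) *\<^sub>R (x0 - p) + ?t *\<^sub>R (T (y n) - p)" by (rule vec_id4)
  finally have "y (Suc n) - p = (1 - ?t) *\<^sub>R (x0 - p) + ?t *\<^sub>R (T (y n) - p)" .
  then have "N (y (Suc n) - p) \<le> (1 - ?t) * N (x0 - p) + ?t * N (T (y n) - p)"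
    using N_convex[OF nN, of ?t "x0 - p" "T (y n) - p"] bet[of "Suc n"] by simp
  also have "\<dots> \<le> (1 - ?t) * N (x0 - p) + ?t * N (x0 - p)"
  proof -
    have "N (T (y n) - p) \<le> N (x0 - p)" using ne[of "y n" p] assms Suc by simp
    then show ?thesis using bet[of "Suc n"] by (simp add: mult_left_mono)
  qed
  also have "(1 - ?t) * N (x0 - p) + ?t * N (x0 - p) = N (x0 - p)" by (simp add: algebra_simps)
  finally show ?case .
qed simp

definition p0 where "p0 = (SOME p. T p = p)"
lemma p0: "T p0 = p0" unfolding p0_def by (rule someI_ex[OF fixT])
definition R where "R = N (x0 - p0)"

lemma R0: "0 \<le> R" unfolding R_def using N_nonneg[OF nN] .

lemma Tyx0: "N (T (y n) - x0) \<le> 2 * R"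
proof -
  have "N (T (y n) - x0) \<le> N (T (y n) - T p0) + N (p0 - x0)"
    using N_diff_tri[OF nN, of "T (y n)" x0 p0] p0 by simp
  also have "\<dots> \<le> R + R" using ne[of "y n" p0] ybound[OF p0, of n] N_commute[OF nN, of p0 x0]
    unfolding R_def by simp
  finally show ?thesis by simp
qed

lemma g_facts: "0 \<le> 1 - \<beta> (Suc n)" "1 - \<beta> (Suc n) \<le> 1" using bSuc[of n] by auto

lemma asreg_step: "(\<lambda>n. N (y (Suc n) - y n)) \<longlonglongrightarrow> 0"
proof (rule xu_lemma[where g = "\<lambda>n. 1 - \<beta> (Suc n)" and b = "\<lambda>n. 0"
      and c = "\<lambda>n. (\<beta> (Suc (Suc n)) - \<beta> (Suc n)) * (2 * R)"])
  show "\<And>n. 0 \<le> N (y (Suc n) - y n)" using N_nonneg[OF nN] by simp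
  show "\<And>n. 0 \<le> 1 - \<beta> (Suc n)" "\<And>n. 1 - \<beta> (Suc n) \<le> 1" using g_facts by auto
  show "\<not> summable (\<lambda>n. 1 - \<beta> (Suc n))" by (rule bdiv)
  show "\<And>n. 0 \<le> (\<beta> (Suc (Suc n)) - \<beta> (Suc n)) * (2 * R)" using bmono' R0 by simp
  show "summable (\<lambda>n. (\<beta> (Suc (Suc n)) - \<beta> (Suc n)) * (2 * R))"
  proof (rule summable_mult2)
    have "summable (\<lambda>n. (\<lambda>j. \<beta> (Suc j) - \<beta> j) (Suc n))"
      by (rule summable_Suc_iff[of "\<lambda>j. \<beta> (Suc j) - \<beta> j", THEN iffD2, OF bsum])
    then show "summable (\<lambda>n. \<beta> (Suc (Suc n)) - \<beta> (Suc n))" by simp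
  qed
  show "\<And>e. 0 < e \<Longrightarrow> \<forall>\<^sub>F n in sequentially. (0::real) \<le> e" by simp
  show "\<forall>\<^sub>F n in sequentially. N (y (Suc (Suc n)) - y (Suc n))
      \<le> (1 - (1 - \<beta> (Suc n))) * N (y (Suc n) - y n) + (1 - \<beta> (Suc n)) * 0 + (\<beta> (Suc (Suc n)) - \<beta> (Suc n)) * (2 * R)"
  proof (rule always_eventually, rule allI)
    fix n
    let ?b1 = "\<beta> (Suc n)" and ?b2 = "\<beta> (Suc (Suc n))"
    have "y (Suc (Suc n)) - y (Suc n) = ((1 - ?b2) *\<^sub>R x0 + ?b2 *\<^sub>R T (y (Suc n))) - ((1 - ?b1) *\<^sub>R x0 + ?b1 *\<^sub>R T (y n))"
      by (simp only: halpern.simps(2))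
    also have "\<dots> = (?b2 - ?b1) *\<^sub>R (T (y (Suc n)) - x0) + ?b1 *\<^sub>R (T (y (Suc n)) - T (y n))"
      by (rule vec_id)
    finally have eq: "y (Suc (Suc n)) - y (Suc n) = (?b2 - ?b1) *\<^sub>R (T (y (Suc n)) - x0) + ?b1 *\<^sub>R (T (y (Suc n)) - T (y n))" .
    have "N (y (Suc (Suc n)) - y (Suc n)) \<le> N ((?b2 - ?b1) *\<^sub>R (T (y (Suc n)) - x0)) + N (?b1 *\<^sub>R (T (y (Suc n)) - T (y n)))"
      unfolding eq by (rule N_tri[OF nN])
    also have "\<dots> = (?b2 - ?b1) * N (T (y (Suc n)) - x0) + ?b1 * N (T (y (Suc n)) - T (y n))"
      using N_scale[OF nN] bmono'[of n] bSuc[of n] by simp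
    also have "\<dots> \<le> (?b2 - ?b1) * (2 * R) + ?b1 * N (y (Suc n) - y n)"
    proof (rule add_mono)
      show "(?b2 - ?b1) * N (T (y (Suc n)) - x0) \<le> (?b2 - ?b1) * (2 * R)"
        using Tyx0[of "Suc n"] bmono'[of n] by (intro mult_left_mono) auto
      show "?b1 * N (T (y (Suc n)) - T (y n)) \<le> ?b1 * N (y (Suc n) - y n)"
        using ne[of "y (Suc n)" "y n"] bSuc[of n] by (intro mult_left_mono) auto
    qed
    finally show "N (y (Suc (Suc n)) - y (Suc n))
      \<le> (1 - (1 - ?b1)) * N (y (Suc n) - y n) + (1 - ?b1) * 0 + (?b2 - ?b1) * (2 * R)" by simp
  qed
qed

lemma gto0: "(\<lambda>n. 1 - \<beta> (Suc n)) \<longlonglongrightarrow> 0"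
proof -
  have "(\<lambda>n. \<beta> (Suc n)) \<longlonglongrightarrow> 1" using blim filterlim_sequentially_Suc by blast
  then have "(\<lambda>n. 1 - \<beta> (Suc n)) \<longlonglongrightarrow> 1 - 1" by (intro tendsto_intros)
  then show ?thesis by simp
qed

lemma asreg: "(\<lambda>n. N (y n - T (y n))) \<longlonglongrightarrow> 0"
proof -
  have "(\<lambda>n. N (y (Suc n) - T (y (Suc n)))) \<longlonglongrightarrow> 0"
  proof (rule Lim_null_comparison)
    show "\<forall>\<^sub>F n in sequentially. norm (N (y (Suc n) - T (y (Suc n)))) \<le> (1 - \<beta> (Suc n)) * (2 * R) + N (y (Suc n) - y n)"
    proof (rule always_eventually, rule allI)
      fix n
      let ?b = "\<beta> (Suc n)"
      have "y (Suc n) - T (y (Suc n)) = ((1 - ?b) *\<^sub>R x0 + ?b *\<^sub>R T (y n)) - T (y (Suc n))"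
        by (simp only: halpern.simps(2))
      also have "\<dots> = (1 - ?b) *\<^sub>R (x0 - T (y n)) + (T (y n) - T (y (Suc n)))" by (rule vec_id2)
      finally have eq: "y (Suc n) - T (y (Suc n)) = (1 - ?b) *\<^sub>R (x0 - T (y n)) + (T (y n) - T (y (Suc n)))" .
      have "N (y (Suc n) - T (y (Suc n))) \<le> N ((1 - ?b) *\<^sub>R (x0 - T (y n))) + N (T (y n) - T (y (Suc n)))"
        unfolding eq by (rule N_tri[OF nN])
      also have "\<dots> \<le> (1 - ?b) * (2 * R) + N (y (Suc n) - y n)"
      proof -
        have "N ((1 - ?b) *\<^sub>R (x0 - T (y n))) = (1 - ?b) * N (T (y n) - x0)"
          using N_scale[OF nN] N_commute[OF nN] bSuc[of n] by simp
        also have "\<dots> \<le> (1 - ?b) * (2 * R)" using Tyx0[of n] bSuc[of n] by (intro mult_left_mono) auto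
        finally show ?thesis using ne[of "y n" "y (Suc n)"] N_commute[OF nN, of "y n" "y (Suc n)"] by linarith
      qed
      finally show "norm (N (y (Suc n) - T (y (Suc n)))) \<le> (1 - ?b) * (2 * R) + N (y (Suc n) - y n)"
        using N_nonneg[OF nN] by simp
    qed
    show "(\<lambda>n. (1 - \<beta> (Suc n)) * (2 * R) + N (y (Suc n) - y n)) \<longlonglongrightarrow> 0"
      using tendsto_add[OF tendsto_mult_left_zero[OF gto0] asreg_step] by simp
  qed
  then show ?thesis using filterlim_sequentially_Suc[of "\<lambda>n. N (y n - T (y n))"] by simp
qed

lemma noise:
  fixes X u :: "nat \<Rightarrow> 'v"
  assumes X0: "X 0 = x0"
    and XS: "\<And>n. X (Suc n) = (1 - \<beta> (Suc n)) *\<^sub>R x0 + \<beta> (Suc n) *\<^sub>R (T (X n) + u (Suc n))"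
    and us: "summable (\<lambda>n. N (u (Suc n)))"
  shows "(\<lambda>n. N (X n - y n)) \<longlonglongrightarrow> 0"
proof (rule xu_lemma[where g = "\<lambda>n. 1 - \<beta> (Suc n)" and b = "\<lambda>n. 0" and c = "\<lambda>n. N (u (Suc n))"])
  show "\<And>n. 0 \<le> N (X n - y n)" using N_nonneg[OF nN] by simp
  show "\<And>n. 0 \<le> 1 - \<beta> (Suc n)" "\<And>n. 1 - \<beta> (Suc n) \<le> 1" using g_facts by auto
  show "\<not> summable (\<lambda>n. 1 - \<beta> (Suc n))" by (rule bdiv)
  show "\<And>n. 0 \<le> N (u (Suc n))" using N_nonneg[OF nN] by simp
  show "summable (\<lambda>n. N (u (Suc n)))" by (rule us)
  show "\<And>e. 0 < e \<Longrightarrow> \<forall>\<^sub>F n in sequentially. (0::real) \<le> e" by simp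
  show "\<forall>\<^sub>F n in sequentially. N (X (Suc n) - y (Suc n))
      \<le> (1 - (1 - \<beta> (Suc n))) * N (X n - y n) + (1 - \<beta> (Suc n)) * 0 + N (u (Suc n))"
  proof (rule always_eventually, rule allI)
    fix n
    let ?b = "\<beta> (Suc n)"
    have "X (Suc n) - y (Suc n) = ((1 - ?b) *\<^sub>R x0 + ?b *\<^sub>R (T (X n) + u (Suc n))) - ((1 - ?b) *\<^sub>R x0 + ?b *\<^sub>R T (y n))"
      unfolding XS by (simp only: halpern.simps(2))
    also have "\<dots> = ?b *\<^sub>R ((T (X n) - T (y n)) + u (Suc n))" by (rule vec_id3)
    finally have eq: "X (Suc n) - y (Suc n) = ?b *\<^sub>R ((T (X n) - T (y n)) + u (Suc n))" .
    have "N (X (Suc n) - y (Suc n)) = ?b * N ((T (X n) - T (y n)) + u (Suc n))"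
      unfolding eq using N_scale[OF nN] bSuc[of n] by simp
    also have "\<dots> \<le> ?b * (N (X n - y n) + N (u (Suc n)))"
      using N_tri[OF nN, of "T (X n) - T (y n)" "u (Suc n)"] ne[of "X n" "y n"] bSuc[of n]
      by (intro mult_left_mono) auto
    also have "\<dots> \<le> ?b * N (X n - y n) + N (u (Suc n))"
    proof -
      have "?b * N (u (Suc n)) \<le> N (u (Suc n))"
        using bSuc[of n] N_nonneg[OF nN, of "u (Suc n)"] mult_left_le_one_le by (metis less_imp_le)
      then show ?thesis by (simp add: distrib_left)
    qed
    finally show "N (X (Suc n) - y (Suc n)) \<le> (1 - (1 - ?b)) * N (X n - y n) + (1 - ?b) * 0 + N (u (Suc n))"
      by simp
  qed
qed

end




lemma vec_id5: "z = (1 - t) *\<^sub>R x + t *\<^sub>R a \<Longrightarrow> (z - p) + (- (1 - t)) *\<^sub>R (x - p) = t *\<^sub>R (a - (p::'v::real_vector))"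
  by (simp add: algebra_simps)

lemma vec_id6: "z = (1 - t) *\<^sub>R x + t *\<^sub>R a \<Longrightarrow> z - a = (1 - t) *\<^sub>R (x - (a::'v::real_vector))"
  by (simp add: algebra_simps)

lemma vec_id7: "(z - p) + (u::'v::real_vector) = z + (u - p)"
  by (simp add: algebra_simps)

lemma N_seq_cont2:
  fixes N :: "'v::real_vector \<Rightarrow> real"
  assumes nN: "is_norm N" and f: "(\<lambda>k. N (f k - l)) \<longlonglongrightarrow> 0"
  shows "(\<lambda>k. N (f k - p + u)) \<longlonglongrightarrow> N (l - p + u)"
  using N_seq_cont[OF nN f, of "u - p"] by (simp add: vec_id7)

lemma N_diff_cont:
  fixes N :: "'v::euclidean_space \<Rightarrow> real"
  assumes nN: "is_norm N"
  shows "continuous_on S (\<lambda>z. N (z - a))"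
proof -
  obtain C where C: "C > 0" "\<And>x y. \<bar>N x - N y\<bar> \<le> C * norm (x - y)"
    using N_lipschitz[OF nN] by blast
  have "C-lipschitz_on S (\<lambda>z. N (z - a))"
  proof (rule lipschitz_onI)
    fix x y assume "x \<in> S" "y \<in> S"
    have "\<bar>N (x - a) - N (y - a)\<bar> \<le> C * norm ((x - a) - (y - a))" by (rule C(2))
    then show "dist (N (x - a)) (N (y - a)) \<le> C * dist x y" by (simp add: dist_norm dist_real_def)
  qed (use C in auto)
  then show ?thesis by (rule lipschitz_on_continuous_on)
qed

context halp
begin

lemma T_cont: "continuous_on S T"
proof -
  obtain c where c: "c > 0" "\<And>x. c * norm x \<le> N x" using N_lower[OF nN] by blast
  obtain C where C: "C > 0" "\<And>x. N x \<le> C * norm x" using N_upper[OF nN] by blast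
  have "(C / c)-lipschitz_on S T"
  proof (rule lipschitz_onI)
    fix a b assume "a \<in> S" "b \<in> S"
    have "c * norm (T a - T b) \<le> C * norm (a - b)"
      using c(2)[of "T a - T b"] ne[of a b] C(2)[of "a - b"] by linarith
    then show "dist (T a) (T b) \<le> C / c * dist a b"
      using c(1) by (simp add: dist_norm field_simps mult.commute)
  qed (use c C in auto)
  then show ?thesis by (rule lipschitz_on_continuous_on)
qed

lemma path:
  assumes t: "0 < t" "t < 1"
  shows "\<exists>z. z = (1 - t) *\<^sub>R x0 + t *\<^sub>R T z"
proof -
  define K where "K = {z. N (z - p0) \<le> R}"
  obtain c where c: "c > 0" "\<And>x. c * norm x \<le> N x" using N_lower[OF nN] by blast
  have "closed K" unfolding K_def
    by (rule closed_Collect_le) (auto intro: N_diff_cont[OF nN])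
  moreover have "bounded K"
    unfolding bounded_iff
  proof (intro exI ballI)
    fix z assume "z \<in> K"
    then have "N (z - p0) \<le> R" by (simp add: K_def)
    then have "norm (z - p0) \<le> R / c" using c(2)[of "z - p0"] c(1) by (simp add: field_simps)
    then show "norm z \<le> norm p0 + R / c" using norm_triangle_sub[of z p0] by linarith
  qed
  ultimately have cK: "compact K" by (simp add: compact_eq_bounded_closed)
  have convK: "convex K"
  proof (rule convexI)
    fix a b :: 'v and u v :: real
    assume ab: "a \<in> K" "b \<in> K" and uv: "0 \<le> u" "0 \<le> v" "u + v = 1"
    have "u *\<^sub>R a + v *\<^sub>R b - p0 = u *\<^sub>R (a - p0) + v *\<^sub>R (b - p0)"
      using uv(3) by (simp add: algebra_simps flip: scaleR_add_left)
    then have "N (u *\<^sub>R a + v *\<^sub>R b - p0) \<le> u * N (a - p0) + v * N (b - p0)"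
      using N_tri[OF nN, of "u *\<^sub>R (a - p0)" "v *\<^sub>R (b - p0)"] N_scale[OF nN] uv by simp
    also have "\<dots> \<le> u * R + v * R"
      using ab uv unfolding K_def by (intro add_mono mult_left_mono) auto
    also have "\<dots> = R" using uv(3) by (simp add: algebra_simps flip: distrib_right)
    finally show "u *\<^sub>R a + v *\<^sub>R b \<in> K" by (simp add: K_def)
  qed
  have neK: "K \<noteq> {}" using R0 by (auto simp: K_def N_0[OF nN] intro!: exI[of _ p0])
  have contS: "continuous_on K (\<lambda>z. (1 - t) *\<^sub>R x0 + t *\<^sub>R T z)"
    by (intro continuous_intros T_cont)
  have mapS: "(\<lambda>z. (1 - t) *\<^sub>R x0 + t *\<^sub>R T z) \<in> K \<rightarrow> K"
  proof
    fix z assume z: "z \<in> K"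
    have "(1 - t) *\<^sub>R x0 + t *\<^sub>R T z - p0 = (1 - t) *\<^sub>R (x0 - p0) + t *\<^sub>R (T z - T p0)"
      using p0 by (simp add: algebra_simps)
    then have "N ((1 - t) *\<^sub>R x0 + t *\<^sub>R T z - p0) \<le> (1 - t) * N (x0 - p0) + t * N (T z - T p0)"
      using N_convex[OF nN, of t "x0 - p0" "T z - T p0"] t by simp
    also have "\<dots> \<le> (1 - t) * R + t * R"
      using z ne[of z p0] t unfolding K_def R_def by (intro add_mono mult_left_mono) auto
    also have "\<dots> = R" by (simp add: algebra_simps)
    finally show "(1 - t) *\<^sub>R x0 + t *\<^sub>R T z \<in> K" by (simp add: K_def)
  qed
  obtain z where "z \<in> K" "(1 - t) *\<^sub>R x0 + t *\<^sub>R T z = z"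
    using brouwer[OF cK convK neK contS mapS] by blast
  then show ?thesis by metis
qed

lemma zbound:
  assumes z: "z = (1 - t) *\<^sub>R x0 + t *\<^sub>R T z" and t: "0 < t" "t < 1" and p: "T p = p"
  shows "N (z - p) \<le> N (x0 - p)"
proof -
  have "z - p = (1 - t) *\<^sub>R (x0 - p) + t *\<^sub>R (T z - T p)"
    using p by (subst z) (simp add: algebra_simps)
  then have "N (z - p) \<le> (1 - t) * N (x0 - p) + t * N (T z - T p)"
    using N_convex[OF nN, of t "x0 - p" "T z - T p"] t by simp
  also have "\<dots> \<le> (1 - t) * N (x0 - p) + t * N (z - p)"
    using ne[of z p] t by (intro add_mono mult_left_mono) auto
  finally have "(1 - t) * N (z - p) \<le> (1 - t) * N (x0 - p)" by (simp add: algebra_simps)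
  then show ?thesis using t by simp
qed

lemma zineq:
  assumes sN: "smooth_norm N"
    and z: "z = (1 - t) *\<^sub>R x0 + t *\<^sub>R T z" and t: "0 < t" "t < 1" and p: "T p = p"
  shows "(1 + t) * (N (z - p))\<^sup>2 \<le> gd N (z - p) (x0 - p)"
proof -
  let ?v = "z - p" and ?G = "gd N (z - p) (x0 - p)"
  have id: "?v + (- (1 - t)) *\<^sub>R (x0 - p) = t *\<^sub>R (T z - p)" by (rule vec_id5[OF z])
  have "(N ?v)\<^sup>2 + gd N ?v ((- (1 - t)) *\<^sub>R (x0 - p)) \<le> (N (?v + (- (1 - t)) *\<^sub>R (x0 - p)))\<^sup>2"
    by (rule gd_G1[OF nN sN])
  also have "\<dots> = t\<^sup>2 * (N (T z - T p))\<^sup>2" unfolding id using N_scale[OF nN] t p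
    by (simp add: power_mult_distrib)
  also have "\<dots> \<le> t\<^sup>2 * (N ?v)\<^sup>2"
    using ne[of z p] N_nonneg[OF nN, of "T z - T p"] by (intro mult_left_mono power_mono) auto
  finally have h: "(N ?v)\<^sup>2 - (1 - t) * ?G \<le> t\<^sup>2 * (N ?v)\<^sup>2"
    using gd_scale[OF nN sN, of ?v "- (1 - t)" "x0 - p"] by (simp add: algebra_simps)
  have "(1 - t) * ((1 + t) * (N ?v)\<^sup>2) \<le> (1 - t) * ?G"
    using h by (simp add: algebra_simps power2_eq_square)
  then show ?thesis using t by simp
qed

end




context halp
begin

lemma qexists:
  assumes sN: "smooth_norm N"
  shows "\<exists>q. T q = q \<and> (\<forall>p. T p = p \<longrightarrow> gd N (p - q) (x0 - q) \<le> 0)"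
proof -
  define tk where "tk k = 1 - inverse (real (Suc (Suc k)))" for k
  have tk: "0 < tk k" "tk k < 1" for k unfolding tk_def by (auto simp: field_simps)
  have "\<forall>k. \<exists>z. z = (1 - tk k) *\<^sub>R x0 + tk k *\<^sub>R T z" using path[OF tk] by blast
  from choice[OF this] obtain zf where zf: "\<And>k. zf k = (1 - tk k) *\<^sub>R x0 + tk k *\<^sub>R T (zf k)" by blast
  have zb: "N (zf k - p0) \<le> R" for k unfolding R_def by (rule zbound[OF zf tk p0])
  have "\<exists>r q. strict_mono r \<and> (\<lambda>k. N (zf (r k) - q)) \<longlonglongrightarrow> 0"
    by (rule N_compact[OF nN, of zf p0 R]) (rule zb)
  then obtain r q where rq: "strict_mono r" "(\<lambda>k. N (zf (r k) - q)) \<longlonglongrightarrow> 0" by blast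
  have tk1: "(\<lambda>k. 1 - tk k) \<longlonglongrightarrow> 0"
    unfolding tk_def using LIMSEQ_inverse_real_of_nat filterlim_sequentially_Suc[of "\<lambda>k. inverse (real (Suc k))"]
    by simp
  have tkr: "(\<lambda>k. 1 - tk (r k)) \<longlonglongrightarrow> 0" using LIMSEQ_subseq_LIMSEQ[OF tk1 rq(1)] by (simp add: o_def)
  have Tq: "T q = q"
  proof -
    have bnd: "N (q - T q) \<le> 2 * N (zf (r k) - q) + (1 - tk (r k)) * (2 * R)" for k
    proof -
      let ?z = "zf (r k)" and ?t = "tk (r k)"
      have "N (?z - T ?z) = (1 - ?t) * N (x0 - T ?z)"
        using vec_id6[OF zf[of "r k"]] N_scale[OF nN] tk[of "r k"] by simp
      also have "\<dots> \<le> (1 - ?t) * (2 * R)"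
      proof -
        have "N (x0 - T ?z) \<le> N (x0 - p0) + N (T p0 - T ?z)" using N_diff_tri[OF nN, of x0 "T ?z" p0] p0 by simp
        also have "\<dots> \<le> R + R" using ne[of p0 ?z] zb[of "r k"] N_commute[OF nN, of p0 ?z] unfolding R_def by simp
        finally show ?thesis using tk[of "r k"] by (intro mult_left_mono) auto
      qed
      finally have a: "N (?z - T ?z) \<le> (1 - ?t) * (2 * R)" .
      have "N (q - T q) \<le> N (q - ?z) + N (?z - T q)" by (rule N_diff_tri[OF nN])
      also have "N (?z - T q) \<le> N (?z - T ?z) + N (T ?z - T q)" by (rule N_diff_tri[OF nN])
      finally show ?thesis using a ne[of ?z q] N_commute[OF nN, of q ?z] by linarith
    qed
    have "(\<lambda>k. 2 * N (zf (r k) - q) + (1 - tk (r k)) * (2 * R)) \<longlonglongrightarrow> 2 * 0 + 0 * (2 * R)"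
      by (intro tendsto_intros rq(2) tkr)
    then have "N (q - T q) \<le> 0"
      by (intro tendsto_lowerbound[of _ _ sequentially]) (use bnd in auto)
    then have "N (q - T q) = 0" using N_nonneg[OF nN, of "q - T q"] by linarith
    then show ?thesis using N_eq0[OF nN] by simp
  qed
  have main: "gd N (p - q) (x0 - q) \<le> 0" if p: "T p = p" for p
  proof -
    have A: "2 * (N (q - p))\<^sup>2 \<le> ((N (q - p + s *\<^sub>R (x0 - p)))\<^sup>2 - (N (q - p))\<^sup>2) / s" if s: "s > 0" for s
    proof -
      have s0: "s \<noteq> 0" using s by simp
      have L1: "(\<lambda>k. N (zf (r k) - p + s *\<^sub>R (x0 - p))) \<longlonglongrightarrow> N (q - p + s *\<^sub>R (x0 - p))"
        by (rule N_seq_cont2[OF nN rq(2)])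
      have L2: "(\<lambda>k. N (zf (r k) - p)) \<longlonglongrightarrow> N (q - p)"
        using N_seq_cont2[OF nN rq(2), of p 0] by simp
      have tl: "(\<lambda>k. tk (r k)) \<longlonglongrightarrow> 1"
        using tendsto_diff[OF tendsto_const[of 1] tkr] by simp
      have F1: "(\<lambda>k. ((N (zf (r k) - p + s *\<^sub>R (x0 - p)))\<^sup>2 - (N (zf (r k) - p))\<^sup>2) / s) \<longlonglongrightarrow>
          ((N (q - p + s *\<^sub>R (x0 - p)))\<^sup>2 - (N (q - p))\<^sup>2) / s"
        by (intro tendsto_intros L1 L2 s0)
      have "(\<lambda>k. (1 + tk (r k)) * (N (zf (r k) - p))\<^sup>2) \<longlonglongrightarrow> (1 + 1) * (N (q - p))\<^sup>2"
        by (intro tendsto_intros L2 tl)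
      then have F2: "(\<lambda>k. (1 + tk (r k)) * (N (zf (r k) - p))\<^sup>2) \<longlonglongrightarrow> 2 * (N (q - p))\<^sup>2" by simp
      have ev: "\<forall>\<^sub>F k in sequentially. (1 + tk (r k)) * (N (zf (r k) - p))\<^sup>2
          \<le> ((N (zf (r k) - p + s *\<^sub>R (x0 - p)))\<^sup>2 - (N (zf (r k) - p))\<^sup>2) / s"
      proof (rule always_eventually, rule allI)
        fix k
        have "(1 + tk (r k)) * (N (zf (r k) - p))\<^sup>2 \<le> gd N (zf (r k) - p) (x0 - p)"
          by (rule zineq[OF sN zf tk p])
        also have "\<dots> \<le> ((N (zf (r k) - p + s *\<^sub>R (x0 - p)))\<^sup>2 - (N (zf (r k) - p))\<^sup>2) / s"
          by (rule gd_upper[OF nN sN s])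
        finally show "(1 + tk (r k)) * (N (zf (r k) - p))\<^sup>2
          \<le> ((N (zf (r k) - p + s *\<^sub>R (x0 - p)))\<^sup>2 - (N (zf (r k) - p))\<^sup>2) / s" .
      qed
      show ?thesis by (rule tendsto_le[OF _ F1 F2 ev]) simp
    qed
    have B: "2 * (N (q - p))\<^sup>2 \<le> gd N (q - p) (x0 - p)"
    proof (rule tendsto_lowerbound[OF gd_right[OF nN sN]])
      show "\<forall>\<^sub>F s in at_right 0. 2 * (N (q - p))\<^sup>2 \<le> ((N (q - p + s *\<^sub>R (x0 - p)))\<^sup>2 - (N (q - p))\<^sup>2) / s"
        by (rule eventually_at_right_01) (rule A)
    qed simp
    have C: "gd N (q - p) (x0 - p) + gd N (q - p) (q - x0) = 2 * (N (q - p))\<^sup>2"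
    proof -
      have "gd N (q - p) (x0 - p) + gd N (q - p) (q - x0) = gd N (q - p) ((x0 - p) + (q - x0))"
        by (rule gd_add[OF nN sN, symmetric])
      also have "(x0 - p) + (q - x0) = q - p" by (simp add: algebra_simps)
      finally show ?thesis using gd_self[OF nN sN, of "q - p"] by simp
    qed
    have "gd N (p - q) (x0 - q) = gd N (- (q - p)) (- (q - x0))" by simp
    also have "\<dots> = gd N (q - p) (q - x0)" by (rule gd_neg[OF nN sN])
    finally show ?thesis using B C by linarith
  qed
  show ?thesis using Tq main by blast
qed

end




context halp
begin

lemma conv:
  assumes sN: "smooth_norm N"
  shows "\<exists>q. T q = q \<and> (\<lambda>n. N (y n - q)) \<longlonglongrightarrow> 0"
proof -
  obtain q where q: "T q = q" and qv: "\<And>p. T p = p \<Longrightarrow> gd N (p - q) (x0 - q) \<le> 0"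
    using qexists[OF sN] by blast
  define Bs where "Bs n = gd N (y (Suc n) - q) (x0 - q)" for n
  have Bev: "\<forall>\<^sub>F n in sequentially. Bs n \<le> e" if e: "e > 0" for e
  proof (rule ccontr)
    assume "\<not> (\<forall>\<^sub>F n in sequentially. Bs n \<le> e)"
    from not_eventually_sequentiallyD[OF this] obtain r :: "nat \<Rightarrow> nat" where r0: "strict_mono r \<and> (\<forall>n. \<not> Bs (r n) \<le> e)" ..
    then have r: "strict_mono r" "\<And>n. \<not> Bs (r n) \<le> e" by auto
    have yb: "N (y (Suc (r k)) - p0) \<le> R" for k unfolding R_def by (rule ybound[OF p0])
    have "\<exists>r2 p. strict_mono r2 \<and> (\<lambda>k. N (y (Suc (r (r2 k))) - p)) \<longlonglongrightarrow> 0"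
      by (rule N_compact[OF nN, of "\<lambda>k. y (Suc (r k))" p0 R]) (rule yb)
    then obtain r2 p where r2: "strict_mono r2" and yp: "(\<lambda>k. N (y (Suc (r (r2 k))) - p)) \<longlonglongrightarrow> 0"
      by blast
    define \<sigma> where "\<sigma> k = Suc (r (r2 k))" for k
    have sm: "strict_mono \<sigma>" unfolding \<sigma>_def strict_mono_def
      using r(1) r2 by (simp add: strict_mono_less)
    have yp': "(\<lambda>k. N (y (\<sigma> k) - p)) \<longlonglongrightarrow> 0" using yp by (simp add: \<sigma>_def)
    have Tp: "T p = p"
    proof -
      have ar: "(\<lambda>k. N (y (\<sigma> k) - T (y (\<sigma> k)))) \<longlonglongrightarrow> 0"
        using LIMSEQ_subseq_LIMSEQ[OF asreg sm] by (simp add: o_def)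
      have bnd: "N (p - T p) \<le> 2 * N (y (\<sigma> k) - p) + N (y (\<sigma> k) - T (y (\<sigma> k)))" for k
      proof -
        let ?z = "y (\<sigma> k)"
        have "N (p - T p) \<le> N (p - ?z) + N (?z - T p)" by (rule N_diff_tri[OF nN])
        also have "N (?z - T p) \<le> N (?z - T ?z) + N (T ?z - T p)" by (rule N_diff_tri[OF nN])
        finally show ?thesis using ne[of ?z p] N_commute[OF nN, of p ?z] by linarith
      qed
      have "(\<lambda>k. 2 * N (y (\<sigma> k) - p) + N (y (\<sigma> k) - T (y (\<sigma> k)))) \<longlonglongrightarrow> 2 * 0 + 0"
        by (intro tendsto_intros yp' ar)
      then have "N (p - T p) \<le> 0"
        by (intro tendsto_lowerbound[of _ _ sequentially]) (use bnd in auto)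
      then have "N (p - T p) = 0" using N_nonneg[OF nN, of "p - T p"] by linarith
      then show ?thesis using N_eq0[OF nN] by simp
    qed
    have A: "e \<le> ((N (p - q + s *\<^sub>R (x0 - q)))\<^sup>2 - (N (p - q))\<^sup>2) / s" if s: "s > 0" for s
    proof -
      have s0: "s \<noteq> 0" using s by simp
      have L1: "(\<lambda>k. N (y (\<sigma> k) - q + s *\<^sub>R (x0 - q))) \<longlonglongrightarrow> N (p - q + s *\<^sub>R (x0 - q))"
        by (rule N_seq_cont2[OF nN yp'])
      have L2: "(\<lambda>k. N (y (\<sigma> k) - q)) \<longlonglongrightarrow> N (p - q)"
        using N_seq_cont2[OF nN yp', of q 0] by simp
      have F1: "(\<lambda>k. ((N (y (\<sigma> k) - q + s *\<^sub>R (x0 - q)))\<^sup>2 - (N (y (\<sigma> k) - q))\<^sup>2) / s) \<longlonglongrightarrow>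
          ((N (p - q + s *\<^sub>R (x0 - q)))\<^sup>2 - (N (p - q))\<^sup>2) / s"
        by (intro tendsto_intros L1 L2 s0)
      have ev: "\<forall>\<^sub>F k in sequentially. e \<le> ((N (y (\<sigma> k) - q + s *\<^sub>R (x0 - q)))\<^sup>2 - (N (y (\<sigma> k) - q))\<^sup>2) / s"
      proof (rule always_eventually, rule allI)
        fix k
        have "e \<le> Bs (r (r2 k))" using r(2)[of "r2 k"] by simp
        also have "\<dots> = gd N (y (\<sigma> k) - q) (x0 - q)" by (simp add: Bs_def \<sigma>_def)
        also have "\<dots> \<le> ((N (y (\<sigma> k) - q + s *\<^sub>R (x0 - q)))\<^sup>2 - (N (y (\<sigma> k) - q))\<^sup>2) / s"
          by (rule gd_upper[OF nN sN s])
        finally show "e \<le> ((N (y (\<sigma> k) - q + s *\<^sub>R (x0 - q)))\<^sup>2 - (N (y (\<sigma> k) - q))\<^sup>2) / s" .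
      qed
      show ?thesis by (rule tendsto_lowerbound[OF F1 ev]) simp
    qed
    have "e \<le> gd N (p - q) (x0 - q)"
    proof (rule tendsto_lowerbound[OF gd_right[OF nN sN]])
      show "\<forall>\<^sub>F s in at_right 0. e \<le> ((N (p - q + s *\<^sub>R (x0 - q)))\<^sup>2 - (N (p - q))\<^sup>2) / s"
        by (rule eventually_at_right_01) (rule A)
    qed simp
    with qv[OF Tp] e show False by linarith
  qed
  have sq: "(\<lambda>n. (N (y n - q))\<^sup>2) \<longlonglongrightarrow> 0"
  proof (rule xu_lemma[where g = "\<lambda>n. 1 - \<beta> (Suc n)" and b = Bs and c = "\<lambda>n. 0"])
    show "\<And>n. 0 \<le> (N (y n - q))\<^sup>2" by simp
    show "\<And>n. 0 \<le> 1 - \<beta> (Suc n)" "\<And>n. 1 - \<beta> (Suc n) \<le> 1" using g_facts by auto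
    show "\<not> summable (\<lambda>n. 1 - \<beta> (Suc n))" by (rule bdiv)
    show "\<And>n. (0::real) \<le> 0" by simp
    show "summable (\<lambda>n. 0::real)" by simp
    show "\<And>e. 0 < e \<Longrightarrow> \<forall>\<^sub>F n in sequentially. Bs n \<le> e" by (rule Bev)
    show "\<forall>\<^sub>F n in sequentially. (N (y (Suc n) - q))\<^sup>2
      \<le> (1 - (1 - \<beta> (Suc n))) * (N (y n - q))\<^sup>2 + (1 - \<beta> (Suc n)) * Bs n + 0"
    proof (rule always_eventually, rule allI)
      fix n
      let ?b = "\<beta> (Suc n)" and ?v = "y (Suc n) - q"
      have h: "y (Suc n) = (1 - ?b) *\<^sub>R x0 + ?b *\<^sub>R T (y n)" by (rule halpern.simps(2))
      have id: "?v + (- (1 - ?b)) *\<^sub>R (x0 - q) = ?b *\<^sub>R (T (y n) - q)" by (rule vec_id5[OF h])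
      have "(N ?v)\<^sup>2 + gd N ?v ((- (1 - ?b)) *\<^sub>R (x0 - q)) \<le> (N (?v + (- (1 - ?b)) *\<^sub>R (x0 - q)))\<^sup>2"
        by (rule gd_G1[OF nN sN])
      also have "\<dots> = ?b\<^sup>2 * (N (T (y n) - T q))\<^sup>2" unfolding id using N_scale[OF nN] bSuc[of n] q
        by (simp add: power_mult_distrib)
      also have "\<dots> \<le> ?b\<^sup>2 * (N (y n - q))\<^sup>2"
        using ne[of "y n" q] N_nonneg[OF nN, of "T (y n) - T q"] by (intro mult_left_mono power_mono) auto
      also have "\<dots> \<le> ?b * (N (y n - q))\<^sup>2"
      proof (rule mult_right_mono)
        show "?b\<^sup>2 \<le> ?b" using bSuc[of n] by (simp add: power2_eq_square mult_left_le_one_le)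
      qed simp
      finally have "(N ?v)\<^sup>2 - (1 - ?b) * Bs n \<le> ?b * (N (y n - q))\<^sup>2"
        using gd_scale[OF nN sN, of ?v "- (1 - ?b)" "x0 - q"] unfolding Bs_def by (simp add: algebra_simps)
      then show "(N ?v)\<^sup>2 \<le> (1 - (1 - ?b)) * (N (y n - q))\<^sup>2 + (1 - ?b) * Bs n + 0" by simp
    qed
  qed
  have "(\<lambda>n. sqrt ((N (y n - q))\<^sup>2)) \<longlonglongrightarrow> sqrt 0"
    by (intro tendsto_intros sq)
  then have "(\<lambda>n. N (y n - q)) \<longlonglongrightarrow> 0" using N_nonneg[OF nN] by simp
  with q show ?thesis by blast
qed

end



theorem theorem3:
  fixes N :: "real ^ 'd \<Rightarrow> real"
    and T :: "real ^ 'd \<Rightarrow> real ^ 'd"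
    and \<beta> :: "nat \<Rightarrow> real"
    and M :: "'a measure"
    and U :: "nat \<Rightarrow> 'a \<Rightarrow> real ^ 'd"
    and X :: "nat \<Rightarrow> 'a \<Rightarrow> real ^ 'd"
    and x0 :: "real ^ 'd"
  assumes "is_norm N"
    and "nonexpansive_wrt N T"
    and "\<exists>p. T p = p"
    and "\<beta> 0 = 0"
    and "\<forall>n\<ge>1. 0 < \<beta> n \<and> \<beta> n < 1"
    and "\<forall>n\<ge>1. \<beta> n \<le> \<beta> (Suc n)"
    and "\<beta> \<longlonglongrightarrow> 1"
    and "\<not> summable (\<lambda>j. 1 - \<beta> (Suc j))"
    and "summable (\<lambda>j. \<beta> (Suc j) - \<beta> j)"
    and "prob_space M"
    and "\<forall>n\<ge>1. integrable M (U n)"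
    and "\<forall>n\<ge>1. integrable M (\<lambda>\<omega>. N (U n \<omega>))"
    and "\<forall>n\<ge>1. (\<integral>\<omega>. U n \<omega> \<partial>M) = 0"
    and "summable (\<lambda>n. \<integral>\<omega>. N (U (Suc n) \<omega>) \<partial>M)"
    and "\<forall>\<omega>. X 0 \<omega> = x0"
    and "\<forall>n \<omega>. X (Suc n) \<omega> =
           (1 - \<beta> (Suc n)) *\<^sub>R x0 + \<beta> (Suc n) *\<^sub>R (T (X n \<omega>) + U (Suc n) \<omega>)"
  shows "(AE \<omega> in M.
            ((\<lambda>n. N (X n \<omega> - T (X n \<omega>))) \<longlonglongrightarrow> 0) \<and>
            (\<forall>p. (\<exists>r. strict_mono r \<and> ((\<lambda>n. N (X (r n) \<omega> - p)) \<longlonglongrightarrow> 0)) \<longrightarrow> T p = p))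
         \<and> (smooth_norm N \<longrightarrow>
            (AE \<omega> in M. \<exists>xs. T xs = xs \<and> ((\<lambda>n. N (X n \<omega> - xs)) \<longlonglongrightarrow> 0)))"
proof -
  note A = assms
  interpret H: halp N T \<beta> x0
    by (rule halp.intro[OF A(1) A(2) A(3) A(4) A(5) A(6) A(7) A(8) A(9)])
  have nN: "is_norm N" by (rule A(1))
  have intN: "integrable M (\<lambda>\<omega>. N (U (Suc n) \<omega>))" for n using A(12) by simp
  have meas: "(\<lambda>\<omega>. ennreal (N (U (Suc n) \<omega>))) \<in> borel_measurable M" for n
    by (rule measurable_compose[OF borel_measurable_integrable[OF intN] measurable_ennreal])
  have eqn: "(\<integral>\<^sup>+ \<omega>. ennreal (N (U (Suc n) \<omega>)) \<partial>M) = ennreal (\<integral>\<omega>. N (U (Suc n) \<omega>) \<partial>M)" for n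
    by (rule nn_integral_eq_integral[OF intN]) (simp add: N_nonneg[OF nN])
  have nonneg: "0 \<le> (\<integral>\<omega>. N (U (Suc n) \<omega>) \<partial>M)" for n
    by (rule integral_nonneg_AE) (simp add: N_nonneg[OF nN])
  have "(\<integral>\<^sup>+ \<omega>. (\<Sum>n. ennreal (N (U (Suc n) \<omega>))) \<partial>M) = (\<Sum>n. \<integral>\<^sup>+ \<omega>. ennreal (N (U (Suc n) \<omega>)) \<partial>M)"
    by (rule nn_integral_suminf[OF meas])
  also have "\<dots> = (\<Sum>n. ennreal (\<integral>\<omega>. N (U (Suc n) \<omega>) \<partial>M))"
    by (simp only: eqn)
  also have "\<dots> = ennreal (\<Sum>n. \<integral>\<omega>. N (U (Suc n) \<omega>) \<partial>M)"
    by (rule suminf_ennreal2[OF nonneg A(14)])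
  finally have fin: "(\<integral>\<^sup>+ \<omega>. (\<Sum>n. ennreal (N (U (Suc n) \<omega>))) \<partial>M) \<noteq> \<infinity>" by simp
  have "AE \<omega> in M. (\<Sum>n. ennreal (N (U (Suc n) \<omega>))) \<noteq> \<infinity>"
    by (rule nn_integral_PInf_AE[OF _ fin]) (rule borel_measurable_suminf_order[OF meas])
  then have AEs: "AE \<omega> in M. summable (\<lambda>n. N (U (Suc n) \<omega>))"
  proof (rule AE_mp, intro AE_I2 impI)
    fix \<omega> assume h: "(\<Sum>n. ennreal (N (U (Suc n) \<omega>))) \<noteq> \<infinity>"
    have "(\<Sum>n. ennreal (N (U (Suc n) \<omega>))) \<noteq> top" using h by simp
    then show "summable (\<lambda>n. N (U (Suc n) \<omega>))"
      by (intro summable_suminf_not_top N_nonneg[OF nN])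
  qed
  have det: "((\<lambda>n. N (X n \<omega> - T (X n \<omega>))) \<longlonglongrightarrow> 0) \<and>
            (\<forall>p. (\<exists>r. strict_mono r \<and> ((\<lambda>n. N (X (r n) \<omega> - p)) \<longlonglongrightarrow> 0)) \<longrightarrow> T p = p)
          \<and> (smooth_norm N \<longrightarrow> (\<exists>xs. T xs = xs \<and> ((\<lambda>n. N (X n \<omega> - xs)) \<longlonglongrightarrow> 0)))"
    if us: "summable (\<lambda>n. N (U (Suc n) \<omega>))" for \<omega>
  proof -
    have xy: "(\<lambda>n. N (X n \<omega> - H.y n)) \<longlonglongrightarrow> 0"
      by (rule H.noise[of "\<lambda>n. X n \<omega>" "\<lambda>n. U n \<omega>"]) (use A(15,16) us in auto)
    have a1: "(\<lambda>n. N (X n \<omega> - T (X n \<omega>))) \<longlonglongrightarrow> 0"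
    proof (rule Lim_null_comparison)
      show "\<forall>\<^sub>F n in sequentially. norm (N (X n \<omega> - T (X n \<omega>))) \<le> 2 * N (X n \<omega> - H.y n) + N (H.y n - T (H.y n))"
      proof (rule always_eventually, rule allI)
        fix n
        let ?x = "X n \<omega>" and ?z = "H.y n"
        have "N (?x - T ?x) \<le> N (?x - ?z) + N (?z - T ?x)" by (rule N_diff_tri[OF nN])
        also have "N (?z - T ?x) \<le> N (?z - T ?z) + N (T ?z - T ?x)" by (rule N_diff_tri[OF nN])
        finally show "norm (N (?x - T ?x)) \<le> 2 * N (?x - ?z) + N (?z - T ?z)"
          using H.ne[of ?z ?x] N_commute[OF nN, of ?x ?z] N_nonneg[OF nN, of "?x - T ?x"] by simp
      qed
      have "(\<lambda>n. 2 * N (X n \<omega> - H.y n) + N (H.y n - T (H.y n))) \<longlonglongrightarrow> 2 * 0 + 0"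
        by (intro tendsto_intros xy H.asreg)
      then show "(\<lambda>n. 2 * N (X n \<omega> - H.y n) + N (H.y n - T (H.y n))) \<longlonglongrightarrow> 0" by simp
    qed
    have a2: "T p = p" if hp: "\<exists>r. strict_mono r \<and> ((\<lambda>n. N (X (r n) \<omega> - p)) \<longlonglongrightarrow> 0)" for p
    proof -
      obtain r :: "nat \<Rightarrow> nat" where r: "strict_mono r" "(\<lambda>n. N (X (r n) \<omega> - p)) \<longlonglongrightarrow> 0"
        using hp by blast
      have ar: "(\<lambda>k. N (X (r k) \<omega> - T (X (r k) \<omega>))) \<longlonglongrightarrow> 0"
        using LIMSEQ_subseq_LIMSEQ[OF a1 r(1)] by (simp add: o_def)
      have bnd: "N (p - T p) \<le> 2 * N (X (r k) \<omega> - p) + N (X (r k) \<omega> - T (X (r k) \<omega>))" for k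
      proof -
        let ?z = "X (r k) \<omega>"
        have "N (p - T p) \<le> N (p - ?z) + N (?z - T p)" by (rule N_diff_tri[OF nN])
        also have "N (?z - T p) \<le> N (?z - T ?z) + N (T ?z - T p)" by (rule N_diff_tri[OF nN])
        finally show ?thesis using H.ne[of ?z p] N_commute[OF nN, of p ?z] by linarith
      qed
      have "(\<lambda>k. 2 * N (X (r k) \<omega> - p) + N (X (r k) \<omega> - T (X (r k) \<omega>))) \<longlonglongrightarrow> 2 * 0 + 0"
        by (intro tendsto_intros r(2) ar)
      then have "N (p - T p) \<le> 0"
        by (intro tendsto_lowerbound[of _ _ sequentially]) (use bnd in auto)
      then have "N (p - T p) = 0" using N_nonneg[OF nN, of "p - T p"] by linarith
      then show ?thesis using N_eq0[OF nN] by simp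
    qed
    have b: "\<exists>xs. T xs = xs \<and> ((\<lambda>n. N (X n \<omega> - xs)) \<longlonglongrightarrow> 0)" if sN: "smooth_norm N"
    proof -
      obtain q where q: "T q = q" "(\<lambda>n. N (H.y n - q)) \<longlonglongrightarrow> 0" using H.conv[OF sN] by blast
      have "(\<lambda>n. N (X n \<omega> - q)) \<longlonglongrightarrow> 0"
      proof (rule Lim_null_comparison)
        show "\<forall>\<^sub>F n in sequentially. norm (N (X n \<omega> - q)) \<le> N (X n \<omega> - H.y n) + N (H.y n - q)"
          using N_diff_tri[OF nN] N_nonneg[OF nN] by simp
        show "(\<lambda>n. N (X n \<omega> - H.y n) + N (H.y n - q)) \<longlonglongrightarrow> 0"
          using tendsto_add[OF xy q(2)] by simp
      qed
      with q(1) show ?thesis by blast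
    qed
    show ?thesis using a1 a2 b by blast
  qed
  have P1: "AE \<omega> in M. ((\<lambda>n. N (X n \<omega> - T (X n \<omega>))) \<longlonglongrightarrow> 0) \<and>
            (\<forall>p. (\<exists>r. strict_mono r \<and> ((\<lambda>n. N (X (r n) \<omega> - p)) \<longlonglongrightarrow> 0)) \<longrightarrow> T p = p)"
    by (rule AE_mp[OF AEs], rule AE_I2, rule impI) (use det in blast)
  have P2: "smooth_norm N \<longrightarrow> (AE \<omega> in M. \<exists>xs. T xs = xs \<and> ((\<lambda>n. N (X n \<omega> - xs)) \<longlonglongrightarrow> 0))"
  proof
    assume sN: "smooth_norm N"
    show "AE \<omega> in M. \<exists>xs. T xs = xs \<and> ((\<lambda>n. N (X n \<omega> - xs)) \<longlonglongrightarrow> 0)"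
      by (rule AE_mp[OF AEs], rule AE_I2, rule impI) (use det sN in blast)
  qed
  show ?thesis using P1 P2 by blast
qed



end
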